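(* Consider the opinion--action model described in the context with $\phi\in(0,1)$ and arbitrary initial values $x_i(0),y_i(0)\in[0,1]$. Suppose there exists a finite time $T>0$ such that $\Theta(T)\neq\emptyset$ and for all integers $t\ge T$, $\Omega(t)=\Omega:=\Omega(T)$ and $\Theta(t)=\Theta:=\Theta(T)$. Then $z_i(t)=z_i(T)$ for all $i\in\Theta$ and all $t\ge T$, and $\lim_{t\to\infty}\mathrm{dist}\big(z_j(t),\operatorname{conv}\{z_i(T)\mid i\in\Theta\}\big)=0$ for all $j\in\Omega$.
   Context: Fix an integer $n\ge 1$, agent set $\mathcal{V}=\{1,\dots,n\}$, a confidence threshold $\epsilon\in[0,1]$ and a decision weight $\phi\in[0,1]$. Each agent $i$ has opinion $x_i(t)\in[0,1]$ and action $y_i(t)\in[0,1]$. For $t\in\mathbb{Z}_{\ge0}$ the model evolves by: $\mathcal{N}_i(t)=\{j\in\mathcal{V}\mid j\neq i,\ |x_i(t)-y_j(t)|\le\epsilon\}$; $x_i(t+1)=\frac{x_i(t)+\sum_{j\in\mathcal{N}_i(t)}y_j(t)}{|\mathcal{N}_i(t)|+1}$; $y_i(t+1)=\phi\,x_i(t+1)+(1-\phi)\,y_{\mathrm{avg}}(t)$ with $y_{\mathrm{avg}}(t)=\frac1n\sum_{k=1}^n y_k(t)$. For $t\ge1$ the augmented state is $\mathbf{z}(t)\in\mathbb{R}^{2n}$ with $z_i(t)=x_i(t)$ and $z_{n+i}(t)=y_i(t-1)$ for $i\in\mathcal{V}$ (indices $1,\dots,n$ are "opinion nodes", $n+1,\dots,2n$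 "action nodes"). For $t\ge1$ define $\Theta(t)=\{i\in\{1,\dots,n\}\mid |\mathcal{N}_i(t)|=0\}$ and $\Omega(t)=\{n+1,\dots,2n\}\cup\{i\in\{1,\dots,n\}\mid |\mathcal{N}_i(t)|>0\}$. $\operatorname{conv}$ denotes convex hull and $\mathrm{dist}(x,S)=\inf_{y\in S}|x-y|$. *)

theory Defs
  imports "HOL-Analysis.Analysis"
begin

text \<open>Opinion--action model. Agents are 1..n; opinions x and actions y are
functions nat => real (values outside 1..n are irrelevant).\<close>

definition nbrs :: "nat \<Rightarrow> real \<Rightarrow> (nat \<Rightarrow> real) \<Rightarrow> (nat \<Rightarrow> real) \<Rightarrow> nat \<Rightarrow> nat set" where
  "nbrs n eps x y i = {j \<in> {1..n}. j \<noteq> i \<and> \<bar>x i - y j\<bar> \<le> eps}"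

definition step :: "nat \<Rightarrow> real \<Rightarrow> real \<Rightarrow> (nat \<Rightarrow> real) \<times> (nat \<Rightarrow> real) \<Rightarrow> (nat \<Rightarrow> real) \<times> (nat \<Rightarrow> real)" where
  "step n eps phi s =
     (let x = fst s; y = snd s;
          x' = (\<lambda>i. (x i + (\<Sum>j\<in>nbrs n eps x y i. y j)) / (real (card (nbrs n eps x y i)) + 1));
          yavg = (\<Sum>k\<in>{1..n}. y k) / real n
      in (x', \<lambda>i. phi * x' i + (1 - phi) * yavg))"

fun state :: "nat \<Rightarrow> real \<Rightarrow> real \<Rightarrow> (nat \<Rightarrow> real) \<Rightarrow> (nat \<Rightarrow> real) \<Rightarrow> nat \<Rightarrow> (nat \<Rightarrow> real) \<times> (nat \<Rightarrow> real)" where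
  "state n eps phi x0 y0 0 = (x0, y0)"
| "state n eps phi x0 y0 (Suc t) = step n eps phi (state n eps phi x0 y0 t)"

abbreviation xs where "xs n eps phi x0 y0 t \<equiv> fst (state n eps phi x0 y0 t)"
abbreviation ys where "ys n eps phi x0 y0 t \<equiv> snd (state n eps phi x0 y0 t)"

text \<open>Augmented state, for t >= 1: z_i(t) = x_i(t), z_{n+i}(t) = y_i(t-1).\<close>
definition zst :: "nat \<Rightarrow> real \<Rightarrow> real \<Rightarrow> (nat \<Rightarrow> real) \<Rightarrow> (nat \<Rightarrow> real) \<Rightarrow> nat \<Rightarrow> nat \<Rightarrow> real" where
  "zst n eps phi x0 y0 t k =
     (if k \<le> n then xs n eps phi x0 y0 t k else ys n eps phi x0 y0 (t - 1) (k - n))"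

definition Theta :: "nat \<Rightarrow> real \<Rightarrow> real \<Rightarrow> (nat \<Rightarrow> real) \<Rightarrow> (nat \<Rightarrow> real) \<Rightarrow> nat \<Rightarrow> nat set" where
  "Theta n eps phi x0 y0 t =
     {i \<in> {1..n}. card (nbrs n eps (xs n eps phi x0 y0 t) (ys n eps phi x0 y0 t) i) = 0}"

definition Omega :: "nat \<Rightarrow> real \<Rightarrow> real \<Rightarrow> (nat \<Rightarrow> real) \<Rightarrow> (nat \<Rightarrow> real) \<Rightarrow> nat \<Rightarrow> nat set" where
  "Omega n eps phi x0 y0 t =
     {n+1..2*n} \<union> {i \<in> {1..n}. card (nbrs n eps (xs n eps phi x0 y0 t) (ys n eps phi x0 y0 t) i) > 0}"

end

theory Submission
  imports Defs
begin

lemma ycomb: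
  fixes phi a b A B :: real
  assumes "0 < phi" "phi < 1" "a \<le> A" "b \<le> B"
  shows "phi * a + (1 - phi) * b \<le> phi * A + (1 - phi) * B"
proof -
  have "phi * a \<le> phi * A" using assms by (intro mult_left_mono) auto
  moreover have "(1 - phi) * b \<le> (1 - phi) * B" using assms by (intro mult_left_mono) auto
  ultimately show ?thesis by linarith
qed

lemma core:
  fixes x y :: "nat \<Rightarrow> nat \<Rightarrow> real" and N :: "nat \<Rightarrow> nat \<Rightarrow> nat set"
  assumes n1: "n \<ge> 1" and ph: "0 < phi" "phi < 1"
  and X: "\<And>t k. t \<ge> T \<Longrightarrow> k \<in> {1..n} \<Longrightarrow> x (Suc t) k = (x t k + (\<Sum>j\<in>N t k. y t j)) / (real (card (N t k)) + 1)"
  and Y: "\<And>t k. t \<ge> T \<Longrightarrow> k \<in> {1..n} \<Longrightarrow> y (Suc t) k = phi * x (Suc t) k + (1 - phi) * ((\<Sum>j\<in>{1..n}. y t j) / real n)"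
  and Nsub: "\<And>t k. t \<ge> T \<Longrightarrow> k \<in> {1..n} \<Longrightarrow> N t k \<subseteq> {1..n}"
  and NTh: "\<And>t k. t \<ge> T \<Longrightarrow> k \<in> Th \<Longrightarrow> N t k = {}"
  and NnTh: "\<And>t k. t \<ge> T \<Longrightarrow> k \<in> {1..n} \<Longrightarrow> k \<notin> Th \<Longrightarrow> N t k \<noteq> {}"
  and Th: "Th \<subseteq> {1..n}" "ii \<in> Th"
  and M: "\<And>i. i \<in> Th \<Longrightarrow> x T i \<le> M"
  shows "\<exists>B. B \<longlonglongrightarrow> 0 \<and> (\<forall>t. 0 \<le> B t) \<and> (\<forall>t\<ge>T. \<forall>k\<in>{1..n}. x t k \<le> M + B t \<and> y t k \<le> M + B t)"
proof -
  have const: "x t i = x T i" if "t \<ge> T" "i \<in> Th" for t i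
    using that(1)
  proof (induction t rule: dec_induct)
    case base then show ?case by simp
  next
    case (step m)
    have "x (Suc m) i = x m i" using X[of m i] NTh[of m i] step(1) that(2) Th(1) by auto
    then show ?case using step by simp
  qed
  have thM: "x t i \<le> M" if "t \<ge> T" "i \<in> Th" for t i using const[OF that] M[OF that(2)] by simp
  have xstep: "x (Suc t) k \<le> M + (p + q) / 2"
    if t: "t \<ge> T" and k: "k \<in> {1..n}" "k \<notin> Th" and bx: "\<forall>k\<in>{1..n}. x t k \<le> M + p"
      and by': "\<forall>j\<in>{1..n}. y t j \<le> M + q" and qp: "q \<le> p" for t k p q
  proof -
    define c where "c = card (N t k)"
    have fin: "finite (N t k)" using Nsub[OF t k(1)] finite_subset by blast
    have c1: "real c \<ge> 1" using NnTh[OF t k] fin c_def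
      by (metis One_nat_def card_gt_0_iff less_eq_Suc_le of_nat_1 of_nat_le_iff)
    have S: "(\<Sum>j\<in>N t k. y t j) \<le> real c * (M + q)"
      unfolding c_def using sum_bounded_above[of "N t k" "y t" "M + q"] by' Nsub[OF t k(1)] by auto
    have xk: "x t k \<le> M + p" using bx k by auto
    have "x (Suc t) k * (real c + 1) = x t k + (\<Sum>j\<in>N t k. y t j)" using X[OF t k(1)] c_def c1 by simp
    also have "\<dots> \<le> M + p + real c * (M + q)" using S xk by linarith
    also have "\<dots> \<le> (M + (p + q) / 2) * (real c + 1)"
    proof -
      have "(real c - 1) * q \<le> (real c - 1) * p" using c1 qp by (intro mult_left_mono) auto
      then show ?thesis by (simp add: algebra_simps)
    qed
    finally show ?thesis using c1 by (smt (verit) mult_le_cancel_right_pos)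
  qed
  have xall: "x (Suc t) k \<le> M + p"
    if t: "t \<ge> T" and k: "k \<in> {1..n}" and bx: "\<forall>k\<in>{1..n}. x t k \<le> M + p"
      and by': "\<forall>j\<in>{1..n}. y t j \<le> M + q" and qp: "q \<le> p" and p0: "0 \<le> p" for t k p q
  proof (cases "k \<in> Th")
    case True then show ?thesis using thM[of "Suc t" k] t p0 by auto
  next
    case False then show ?thesis using xstep[OF t k False bx by' qp] qp by (simp add: field_simps)
  qed
  have avg: "(\<Sum>j\<in>{1..n}. y t j) / real n \<le> M + q - (q - q') / real n"
    if by': "\<forall>j\<in>{1..n}. y t j \<le> M + q" and y0: "y t ii \<le> M + q'" for t q q'
  proof -
    have ii: "ii \<in> {1..n}" using Th by auto
    have "(\<Sum>j\<in>{1..n}. y t j) = y t ii + (\<Sum>j\<in>{1..n} - {ii}. y t j)"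
      using ii by (simp add: sum.remove)
    also have "(\<Sum>j\<in>{1..n} - {ii}. y t j) \<le> real (n - 1) * (M + q)"
      using sum_bounded_above[of "{1..n} - {ii}" "y t" "M + q"] by' ii by auto
    finally have "(\<Sum>j\<in>{1..n}. y t j) \<le> M + q' + real (n - 1) * (M + q)" using y0 by linarith
    also have "\<dots> = (M + q - (q - q') / real n) * real n" using n1
      by (simp add: of_nat_diff field_simps)
    finally show ?thesis using n1 by (simp add: pos_divide_le_eq)
  qed
  define g where "g = phi * (1 - phi) / real n"
  define \<rho> where "\<rho> = 1 - g / 2"
  have g0: "0 < g" "g \<le> 1"
  proof -
    have "real n \<ge> 1" using n1 by simp
    moreover have "phi * (1 - phi) \<le> 1" using ph by (smt (verit) mult_le_one)
    moreover have "0 < phi * (1 - phi)" using ph by simp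
    ultimately show "0 < g" "g \<le> 1" unfolding g_def by (auto simp: field_simps)
  qed
  let ?bd = "\<lambda>t p. \<forall>k\<in>{1..n}. x t k \<le> M + p \<and> y t k \<le> M + p"
  have one: "?bd (Suc t) p" if t: "t \<ge> T" and b: "?bd t p" and p0: "0 \<le> p" for t p
  proof -
    have bx: "\<forall>k\<in>{1..n}. x t k \<le> M + p" and by': "\<forall>k\<in>{1..n}. y t k \<le> M + p" using b by auto
    have ii: "ii \<in> {1..n}" using Th by auto
    have a: "(\<Sum>j\<in>{1..n}. y t j) / real n \<le> M + p"
      using avg[OF by', of p] by' ii by auto
    show ?thesis
    proof
      fix k assume k: "k \<in> {1..n}"
      have xs: "x (Suc t) k \<le> M + p" using xall[OF t k bx by' order.refl p0] .
      have "y (Suc t) k \<le> phi * (M + p) + (1 - phi) * (M + p)"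
        unfolding Y[OF t k] using xs a ph by (intro ycomb) auto
      then show "x (Suc t) k \<le> M + p \<and> y (Suc t) k \<le> M + p" using xs by (simp add: algebra_simps)
    qed
  qed
  have three: "?bd (Suc (Suc (Suc t))) (\<rho> * p)" if t: "t \<ge> T" and b: "?bd t p" and p0: "0 \<le> p" for t p
  proof -
    have ii: "ii \<in> {1..n}" using Th by auto
    have b1: "?bd (Suc t) p" using one[OF t b p0] .
    have b2: "?bd (Suc (Suc t)) p" using one[OF _ b1 p0] t by auto
    have yii: "y (Suc t) ii \<le> M + (1 - phi) * p"
    proof -
      have "x (Suc t) ii \<le> M" using thM[of "Suc t" ii] t Th by auto
      moreover have "(\<Sum>j\<in>{1..n}. y t j) / real n \<le> M + p" using avg[of t p p] b ii by auto
      ultimately have "y (Suc t) ii \<le> phi * M + (1 - phi) * (M + p)"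
        unfolding Y[OF t ii] using ph by (intro ycomb) auto
      then show ?thesis by (simp add: algebra_simps)
    qed
    have a1: "(\<Sum>j\<in>{1..n}. y (Suc t) j) / real n \<le> M + p - (p - (1 - phi) * p) / real n"
      using avg[of "Suc t" p "(1-phi)*p"] b1 yii by auto
    have y2: "y (Suc (Suc t)) k \<le> M + (1 - g) * p" if k: "k \<in> {1..n}" for k
    proof -
      have "y (Suc (Suc t)) k \<le> phi * (M + p) + (1 - phi) * (M + p - (p - (1 - phi) * p) / real n)"
        unfolding Y[OF le_SucI[OF t] k] using t k b2 a1 ph by (intro ycomb) auto
      also have "\<dots> = M + (1 - g) * p" unfolding g_def by (simp add: field_simps)
      finally show ?thesis .
    qed
    have a2: "(\<Sum>j\<in>{1..n}. y (Suc (Suc t)) j) / real n \<le> M + (1 - g) * p"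
      using avg[of "Suc (Suc t)" "(1-g)*p" "(1-g)*p"] y2 ii by auto
    have gp: "(1 - g) * p \<le> p" using g0 p0 by (simp add: mult_left_le_one_le)
    have x3: "x (Suc (Suc (Suc t))) k \<le> M + \<rho> * p" if k: "k \<in> {1..n}" for k
    proof (cases "k \<in> Th")
      case True
      have "0 \<le> \<rho> * p" using g0 p0 unfolding \<rho>_def by simp
      moreover have "x (Suc (Suc (Suc t))) k \<le> M" using thM[of "Suc (Suc (Suc t))" k] t True by simp
      ultimately show ?thesis by linarith
    next
      case False
      have "x (Suc (Suc (Suc t))) k \<le> M + (p + (1 - g) * p) / 2"
        using xstep[of "Suc (Suc t)" k p "(1-g)*p"] t k False b2 y2 gp by auto
      then show ?thesis unfolding \<rho>_def by (simp add: field_simps)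
    qed
    show ?thesis
    proof
      fix k assume k: "k \<in> {1..n}"
      have "y (Suc (Suc (Suc t))) k \<le> phi * (M + \<rho> * p) + (1 - phi) * (M + (1 - g) * p)"
        unfolding Y[OF le_SucI[OF le_SucI[OF t]] k] using t k x3[OF k] a2 ph by (intro ycomb) auto
      also have "\<dots> \<le> M + \<rho> * p"
      proof -
        have "(1 - g) * p \<le> \<rho> * p" unfolding \<rho>_def using p0 g0 by (intro mult_right_mono) auto
        then have "(1 - phi) * ((1 - g) * p) \<le> (1 - phi) * (\<rho> * p)" using ph by (intro mult_left_mono) auto
        then show ?thesis by (simp add: algebra_simps)
      qed
      finally show "x (Suc (Suc (Suc t))) k \<le> M + \<rho> * p \<and> y (Suc (Suc (Suc t))) k \<le> M + \<rho> * p"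
        using x3[OF k] by simp
    qed
  qed
  define p0 where "p0 = (\<Sum>k\<in>{1..n}. \<bar>x T k - M\<bar> + \<bar>y T k - M\<bar>)"
  have p00: "0 \<le> p0" unfolding p0_def by (intro sum_nonneg) auto
  have bT: "?bd T p0"
  proof
    fix k assume k: "k \<in> {1..n}"
    have "\<bar>x T k - M\<bar> + \<bar>y T k - M\<bar> \<le> p0" unfolding p0_def
      by (rule member_le_sum[OF k]) auto
    then show "x T k \<le> M + p0 \<and> y T k \<le> M + p0" by linarith
  qed
  have rho: "0 < \<rho>" "\<rho> < 1" using g0 unfolding \<rho>_def by auto
  have bm: "?bd (T + 3 * m) (\<rho> ^ m * p0)" for m
  proof (induction m)
    case 0 then show ?case using bT by simp
  next
    case (Suc m)
    have "?bd (Suc (Suc (Suc (T + 3 * m)))) (\<rho> * (\<rho> ^ m * p0))"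
      using three[OF _ Suc] rho p00 by (simp del: ball_simps)
    moreover have "Suc (Suc (Suc (T + 3 * m))) = T + 3 * Suc m" by simp
    ultimately show ?case by (simp only: power_Suc mult.assoc)
  qed
  have bmr: "?bd (T + 3 * m + r) (\<rho> ^ m * p0)" if "r < 3" for m r
  proof -
    have pp: "0 \<le> \<rho> ^ m * p0" using rho p00 by simp
    have b1: "?bd (Suc (T + 3 * m)) (\<rho> ^ m * p0)" using one[OF _ bm pp] by simp
    have b2: "?bd (Suc (Suc (T + 3 * m))) (\<rho> ^ m * p0)" using one[OF _ b1 pp] by simp
    have r3: "r = 0 \<or> r = 1 \<or> r = 2" using that by auto
    moreover have "T + 3 * m + 1 = Suc (T + 3 * m)" "T + 3 * m + 2 = Suc (Suc (T + 3 * m))" by simp_all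
    from r3 show ?thesis
    proof (elim disjE)
      assume "r = 0" then show ?thesis using bm[of m] by simp
    next
      assume "r = 1" then show ?thesis using b1 by simp
    next
      assume "r = 2" then show ?thesis using b2 by (simp add: numeral_2_eq_2)
    qed
  qed
  define B where "B t = \<rho> ^ ((t - T) div 3) * p0" for t
  have Bt: "?bd t (B t)" if "t \<ge> T" for t
  proof -
    have "t = T + 3 * ((t - T) div 3) + (t - T) mod 3" using that by simp
    moreover have "(t - T) mod 3 < 3" by simp
    ultimately have "?bd (T + 3 * ((t - T) div 3) + (t - T) mod 3) (\<rho> ^ ((t - T) div 3) * p0)"
      using bmr by blast
    then show ?thesis unfolding B_def using \<open>t = _\<close> by simp
  qed
  have hl: "filterlim (\<lambda>t. (t - T) div 3) sequentially sequentially"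
    unfolding filterlim_at_top eventually_sequentially
  proof
    fix Z show "\<exists>N. \<forall>t\<ge>N. Z \<le> (t - T) div 3"
    proof (intro exI allI impI)
      fix t assume "T + 3 * Z \<le> t"
      then have "3 * Z \<le> t - T" by simp
      then show "Z \<le> (t - T) div 3" by (simp add: less_eq_div_iff_mult_less_eq mult.commute)
    qed
  qed
  have "(\<lambda>m. \<rho> ^ m) \<longlonglongrightarrow> 0" using rho by (intro LIMSEQ_power_zero) auto
  then have "(\<lambda>t. \<rho> ^ ((t - T) div 3)) \<longlonglongrightarrow> 0" by (rule filterlim_compose[OF _ hl])
  then have "B \<longlonglongrightarrow> 0" unfolding B_def by (rule tendsto_mult_left_zero)
  moreover have "\<forall>t. 0 \<le> B t" unfolding B_def using rho p00 by simp
  moreover have "\<forall>t\<ge>T. ?bd t (B t)" using Bt by simp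
  ultimately show ?thesis by (intro exI[of _ B] conjI)
qed


lemma hullbd:
  fixes H :: "real set"
  assumes "m \<in> H" "M \<in> H" "convex H" "v \<le> M + b1" "- v \<le> - m + b2" "0 \<le> b1" "0 \<le> b2"
  shows "infdist v H \<le> b1 + b2"
proof (cases "v > M")
  case True
  have "infdist v H \<le> dist v M" by (rule infdist_le[OF assms(2)])
  then show ?thesis using True assms by (simp add: dist_real_def)
next
  case F1: False
  show ?thesis
  proof (cases "v < m")
    case True
    have "infdist v H \<le> dist v m" by (rule infdist_le[OF assms(1)])
    then show ?thesis using True assms by (simp add: dist_real_def)
  next
    case False
    have "closed_segment m M \<subseteq> H" using assms(1,2,3) convex_contains_segment by blast
    moreover have "v \<in> closed_segment m M" using F1 False by (simp add: closed_segment_eq_real_ivl)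
    ultimately have "infdist v H \<le> dist v v" by (intro infdist_le) auto
    then show ?thesis using assms by simp
  qed
qed

theorem proposition3:
  fixes n :: nat and eps phi :: real and x0 y0 :: "nat \<Rightarrow> real" and T :: nat
  assumes "n \<ge> 1"
    and "0 \<le> eps" and "eps \<le> 1"
    and "0 < phi" and "phi < 1"
    and "\<forall>i\<in>{1..n}. x0 i \<in> {0..1} \<and> y0 i \<in> {0..1}"
    and "T > 0"
    and "Theta n eps phi x0 y0 T \<noteq> {}"
    and "\<forall>t\<ge>T. Omega n eps phi x0 y0 t = Omega n eps phi x0 y0 T
               \<and> Theta n eps phi x0 y0 t = Theta n eps phi x0 y0 T"
  shows "(\<forall>i\<in>Theta n eps phi x0 y0 T. \<forall>t\<ge>T. zst n eps phi x0 y0 t i = zst n eps phi x0 y0 T i)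
       \<and> (\<forall>j\<in>Omega n eps phi x0 y0 T.
            (\<lambda>t. infdist (zst n eps phi x0 y0 t j)
                   (convex hull ((\<lambda>i. zst n eps phi x0 y0 T i) ` Theta n eps phi x0 y0 T)))
            \<longlonglongrightarrow> 0)"
proof -
  note n1 = assms(1) and ph = assms(4,5)
  define x where "x t = xs n eps phi x0 y0 t" for t
  define y where "y t = ys n eps phi x0 y0 t" for t
  define N where "N t k = nbrs n eps (x t) (y t) k" for t k
  define Th where "Th = Theta n eps phi x0 y0 T"
  have X: "x (Suc t) k = (x t k + (\<Sum>j\<in>N t k. y t j)) / (real (card (N t k)) + 1)" for t k
    unfolding x_def y_def N_def by (simp add: step_def Let_def)
  have Y: "y (Suc t) k = phi * x (Suc t) k + (1 - phi) * ((\<Sum>j\<in>{1..n}. y t j) / real n)" for t k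
    unfolding x_def y_def N_def by (simp add: step_def Let_def)
  have Nsub: "N t k \<subseteq> {1..n}" for t k unfolding N_def nbrs_def by auto
  have finN: "finite (N t k)" for t k using Nsub finite_subset by blast
  have ThT: "Theta n eps phi x0 y0 t = Th" if "t \<ge> T" for t using assms(9) that unfolding Th_def by blast
  have NTh: "N t k = {}" if "t \<ge> T" "k \<in> Th" for t k
  proof -
    have "k \<in> Theta n eps phi x0 y0 t" using ThT[OF that(1)] that(2) by simp
    then have "card (N t k) = 0" unfolding Theta_def N_def x_def y_def by simp
    then show ?thesis using finN by simp
  qed
  have NnTh: "N t k \<noteq> {}" if "t \<ge> T" "k \<in> {1..n}" "k \<notin> Th" for t k
  proof
    assume "N t k = {}"
    then have "k \<in> Theta n eps phi x0 y0 t" unfolding Theta_def N_def x_def y_def using that(2) by simp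
    then show False using ThT[OF that(1)] that(3) by simp
  qed
  have ThS: "Th \<subseteq> {1..n}" unfolding Th_def Theta_def by auto
  obtain i0 where i0: "i0 \<in> Th" using assms(8) Th_def by auto
  have finTh: "finite Th" using ThS finite_subset by blast
  define M where "M = Max (x T ` Th)"
  define m where "m = Min (x T ` Th)"
  have MM: "x T i \<le> M" "m \<le> x T i" if "i \<in> Th" for i
    unfolding M_def m_def using that finTh by auto
  have Xn: "- x (Suc t) k = (- x t k + (\<Sum>j\<in>N t k. - y t j)) / (real (card (N t k)) + 1)" for t k
    unfolding X sum_negf by (simp only: minus_divide_left minus_add_distrib)
  have Yn: "- y (Suc t) k = phi * (- x (Suc t) k) + (1 - phi) * ((\<Sum>j\<in>{1..n}. - y t j) / real n)" for t k
    unfolding Y sum_negf by simp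
  have X': "x (Suc t) k = (x t k + (\<Sum>j\<in>N t k. y t j)) / (real (card (N t k)) + 1)" if "t \<ge> T" "k \<in> {1..n}" for t k
    by (rule X)
  have Y': "y (Suc t) k = phi * x (Suc t) k + (1 - phi) * ((\<Sum>j\<in>{1..n}. y t j) / real n)" if "t \<ge> T" "k \<in> {1..n}" for t k
    by (rule Y)
  have Nsub': "N t k \<subseteq> {1..n}" if "t \<ge> T" "k \<in> {1..n}" for t k by (rule Nsub)
  have Xn': "- x (Suc t) k = (- x t k + (\<Sum>j\<in>N t k. - y t j)) / (real (card (N t k)) + 1)" if "t \<ge> T" "k \<in> {1..n}" for t k
    by (rule Xn)
  have Yn': "- y (Suc t) k = phi * (- x (Suc t) k) + (1 - phi) * ((\<Sum>j\<in>{1..n}. - y t j) / real n)" if "t \<ge> T" "k \<in> {1..n}" for t k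
    by (rule Yn)
  have ex1: "\<exists>B. B \<longlonglongrightarrow> 0 \<and> (\<forall>t. 0 \<le> B t) \<and> (\<forall>t\<ge>T. \<forall>k\<in>{1..n}. x t k \<le> M + B t \<and> y t k \<le> M + B t)"
    by (rule core[where x=x and y=y and N=N and Th=Th and ii=i0 and M=M and T=T, OF n1 ph X' Y' Nsub' NTh NnTh ThS i0 MM(1)])
  then obtain B1 where B1: "B1 \<longlonglongrightarrow> 0" "\<forall>t. 0 \<le> B1 t"
      "\<forall>t\<ge>T. \<forall>k\<in>{1..n}. x t k \<le> M + B1 t \<and> y t k \<le> M + B1 t"
    by (elim exE conjE) 
  have MMn: "- x T i \<le> - m" if "i \<in> Th" for i using MM(2)[OF that] by simp
  have ex2: "\<exists>B. B \<longlonglongrightarrow> 0 \<and> (\<forall>t. 0 \<le> B t) \<and> (\<forall>t\<ge>T. \<forall>k\<in>{1..n}. - x t k \<le> - m + B t \<and> - y t k \<le> - m + B t)"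
    by (rule core[where x="\<lambda>t k. - x t k" and y="\<lambda>t k. - y t k" and N=N and Th=Th and ii=i0 and M="- m" and T=T, OF n1 ph Xn' Yn' Nsub' NTh NnTh ThS i0 MMn])
  then obtain B2 where B2: "B2 \<longlonglongrightarrow> 0" "\<forall>t. 0 \<le> B2 t"
      "\<forall>t\<ge>T. \<forall>k\<in>{1..n}. - x t k \<le> - m + B2 t \<and> - y t k \<le> - m + B2 t"
    by (elim exE conjE)
  have const: "x t i = x T i" if "t \<ge> T" "i \<in> Th" for t i
    using that(1)
  proof (induction t rule: dec_induct)
    case base then show ?case by simp
  next
    case (step k)
    have "x (Suc k) i = x k i" using X[of k i] NTh[of k i] step(1) that(2) by auto
    then show ?case using step by simp
  qed
  have zx: "zst n eps phi x0 y0 t k = x t k" if "k \<le> n" for t k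
    using that unfolding zst_def x_def by simp
  have zy: "zst n eps phi x0 y0 t k = y (t - 1) (k - n)" if "k > n" for t k
    using that unfolding zst_def y_def by simp
  have img: "(\<lambda>i. zst n eps phi x0 y0 T i) ` Th = x T ` Th"
    using ThS zx by (intro image_cong) auto
  define H where "H = convex hull (x T ` Th)"
  have mH: "m \<in> H" "M \<in> H" unfolding H_def m_def M_def using finTh i0
    by (auto intro!: hull_inc Min_in Max_in)
  have cH: "convex H" unfolding H_def by simp
  define E where "E t = B1 t + B2 t" for t
  have E0: "E \<longlonglongrightarrow> 0" unfolding E_def using tendsto_add[OF B1(1) B2(1)] by simp
  have bx: "infdist (x t k) H \<le> E t" if "t \<ge> T" "k \<in> {1..n}" for t k
    unfolding E_def using hullbd[OF mH cH, of "x t k" "B1 t" "B2 t"] B1 B2 that by auto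
  have by': "infdist (y t k) H \<le> E t" if "t \<ge> T" "k \<in> {1..n}" for t k
    unfolding E_def using hullbd[OF mH cH, of "y t k" "B1 t" "B2 t"] B1 B2 that by auto
  have part1: "\<forall>i\<in>Th. \<forall>t\<ge>T. zst n eps phi x0 y0 t i = zst n eps phi x0 y0 T i"
    using const zx ThS by fastforce
  have part2: "(\<lambda>t. infdist (zst n eps phi x0 y0 t j) H) \<longlonglongrightarrow> 0"
    if j: "j \<in> Omega n eps phi x0 y0 T" for j
  proof (cases "j \<le> n")
    case True
    have j1: "j \<in> {1..n}" using j True unfolding Omega_def by auto
    have "eventually (\<lambda>t. norm (infdist (zst n eps phi x0 y0 t j) H) \<le> E t) sequentially"
      unfolding eventually_sequentially
      using bx[OF _ j1] zx[OF True] by (intro exI[of _ T]) (auto simp: abs_of_nonneg infdist_nonneg)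
    then show ?thesis using E0 by (rule Lim_null_comparison)
  next
    case False
    have j1: "j - n \<in> {1..n}" using j False unfolding Omega_def by auto
    define E' where "E' t = E (t - 1)" for t
    have "(\<lambda>t. E' (Suc t)) \<longlonglongrightarrow> 0" unfolding E'_def using E0 by simp
    then have E'0: "E' \<longlonglongrightarrow> 0" by (rule LIMSEQ_imp_Suc)
    have "eventually (\<lambda>t. norm (infdist (zst n eps phi x0 y0 t j) H) \<le> E' t) sequentially"
      unfolding eventually_sequentially E'_def
    proof (intro exI[of _ "Suc T"] allI impI)
      fix t assume "Suc T \<le> t"
      then have "t - 1 \<ge> T" by simp
      then show "norm (infdist (zst n eps phi x0 y0 t j) H) \<le> E (t - 1)"
        using by'[OF _ j1] zy[of j t] False by (auto simp: abs_of_nonneg infdist_nonneg)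
    qed
    then show ?thesis using E'0 by (rule Lim_null_comparison)
  qed
  show ?thesis
    using part1 part2 unfolding Th_def[symmetric] img H_def by blast
qed

end
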